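(* Let $m\ge n\ge3$ be integers. If $Q\in\mathfrak{C}^0_{(m)}$, then $Q\in\mathfrak{C}^0_{(n)}$. If $Q\in\mathfrak{C}^{0,\alpha}_{(m)}$, then $Q\in\mathfrak{C}^{0,\alpha}_{(n)}$.
   Context: Fix $\mathsf{a}>0$, $\Xi_0>0$, $R_0=\mathsf{a}\Xi_0$, and $\alpha\in(0,1)$. For integer $n\ge3$ and $\Xi>0$, $B^{(n)}(\Xi)$ is the open ball of radius $\Xi$ in $\mathbb{R}^n$. For $f$ on $\bar B^{(n)}(\Xi)$: $\|f;C^0\|=\sup|f|$ and $\|f;C^{0,\alpha}\|=\sup|f|+\sup\{|f(\xi')-f(\xi)|/|\xi'-\xi|^\alpha:\ \xi,\xi'\in\bar B^{(n)}(\Xi),\ 0<|\xi'-\xi|\le1\}$. For a function $Q$ of $(\varpi,z)$, $\varpi\ge0$, set $Q^{\flat(n)}(\xi)=Q(\mathsf{a}\sqrt{\xi_1^2+\dots+\xi_{n-1}^2},\mathsf{a}\xi_n)$, and $r=\sqrt{\varpi^2+z^2}$. Kelvin transform: $\xi^\star=(\Xi_0/|\xi|)^2\xi$, $f_{\star(n)}(\xi^\star)=(|\xi|/\Xi_0)^{n-2}f(\xi)$. $\mathfrak{C}^{0}(\bar{\mathfrak{D}}(R))$ (resp. $\mathfrak{C}^{0,\alpha}(\bar{\mathfrak{D}}(R))$): continuous $Q$ on $\{r\le R\}$, even in $z$, with $Q^{\flat(n)}\in C^0(\bar B^{(n)}(R/\mathsf{a}))$ (resp. $C^{0,\alpha}$),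 norm that of $Q^{\flat(n)}$ (independent of $n$). $\mathfrak{C}^0_{(n)}(\overline{\mathfrak{D}^{c}}(R_0))$ (resp. $\mathfrak{C}^{0,\alpha}_{(n)}(\overline{\mathfrak{D}^{c}}(R_0))$): $Q$ on $\{r\ge R_0\}$, even in $z$, such that $(Q^{\flat(n)})_{\star(n)}$ on $\bar B^{(n)}(\Xi_0)\setminus\{0\}$ is the restriction of some $F\in C^0(\bar B^{(n)}(\Xi_0))$ (resp. $C^{0,\alpha}$); norm that of $F$. Cut-off $\chi\in C^\infty(\mathbb{R})$ with $\chi(t)=1$ for $t\le1$, $0<\chi<1$ on $(1,2)$, $\chi(t)=0$ for $t\ge2$; $Q^{[0]}=\chi(r/R_0)Q$, $Q^{[\infty]}=(1-\chi(r/R_0))Q$. $\mathfrak{C}^0_{(n)}$ (resp. $\mathfrak{C}^{0,\alpha}_{(n)}$): $Q$ even in $z$ with $Q^{[0]}\in\mathfrak{C}^0(\bar{\mathfrak{D}}(2R_0))$ and $Q^{[\infty]}\in\mathfrak{C}^0_{(n)}(\overline{\mathfrak{D}^c}(R_0))$ (resp. with $0,\alpha$), norm the maximum of the two norms. *)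

theory Defs
  imports "HOL-Analysis.Analysis"
begin

text \<open>Points of R^n are encoded as functions nat => real supported on {..<n};
  coordinate xi_k of the paper is component k-1.\<close>

definition enorm :: "nat \<Rightarrow> (nat \<Rightarrow> real) \<Rightarrow> real" where
  "enorm n \<xi> = sqrt (\<Sum>i<n. (\<xi> i)\<^sup>2)"

definition edist :: "nat \<Rightarrow> (nat \<Rightarrow> real) \<Rightarrow> (nat \<Rightarrow> real) \<Rightarrow> real" where
  "edist n \<xi> \<eta> = enorm n (\<lambda>i. \<xi> i - \<eta> i)"

definition cballn :: "nat \<Rightarrow> real \<Rightarrow> (nat \<Rightarrow> real) set" where
  "cballn n \<Xi> = {\<xi>. (\<forall>i\<ge>n. \<xi> i = 0) \<and> enorm n \<xi> \<le> \<Xi>}"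

definition C0 :: "nat \<Rightarrow> real \<Rightarrow> ((nat \<Rightarrow> real) \<Rightarrow> real) \<Rightarrow> bool" where
  "C0 n \<Xi> f \<longleftrightarrow>
     (\<exists>M. \<forall>\<xi>\<in>cballn n \<Xi>. \<bar>f \<xi>\<bar> \<le> M) \<and>
     (\<forall>\<xi>\<in>cballn n \<Xi>. \<forall>\<epsilon>>0. \<exists>\<delta>>0. \<forall>\<eta>\<in>cballn n \<Xi>.
        edist n \<eta> \<xi> < \<delta> \<longrightarrow> \<bar>f \<eta> - f \<xi>\<bar> < \<epsilon>)"

definition C0a :: "real \<Rightarrow> nat \<Rightarrow> real \<Rightarrow> ((nat \<Rightarrow> real) \<Rightarrow> real) \<Rightarrow> bool" where
  "C0a \<alpha> n \<Xi> f \<longleftrightarrow>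
     (\<exists>M. \<forall>\<xi>\<in>cballn n \<Xi>. \<bar>f \<xi>\<bar> \<le> M) \<and>
     (\<exists>H. \<forall>\<xi>\<in>cballn n \<Xi>. \<forall>\<xi>'\<in>cballn n \<Xi>.
        0 < edist n \<xi>' \<xi> \<and> edist n \<xi>' \<xi> \<le> 1 \<longrightarrow>
        \<bar>f \<xi>' - f \<xi>\<bar> \<le> H * (edist n \<xi>' \<xi>) powr \<alpha>)"

definition flat :: "real \<Rightarrow> nat \<Rightarrow> (real \<Rightarrow> real \<Rightarrow> real) \<Rightarrow> (nat \<Rightarrow> real) \<Rightarrow> real" where
  "flat a n Q \<xi> = Q (a * sqrt (\<Sum>i<n - 1. (\<xi> i)\<^sup>2)) (a * \<xi> (n - 1))"

text \<open>Kelvin transform: f_star(eta) = (|xi|/Xi0)^(n-2) f(xi) where eta = xi^star,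
  i.e. xi = (Xi0/|eta|)^2 eta and |xi|/Xi0 = Xi0/|eta|.\<close>
definition kelvin :: "real \<Rightarrow> nat \<Rightarrow> ((nat \<Rightarrow> real) \<Rightarrow> real) \<Rightarrow> (nat \<Rightarrow> real) \<Rightarrow> real" where
  "kelvin \<Xi>0 n f \<eta> = (\<Xi>0 / enorm n \<eta>) ^ (n - 2) * f (\<lambda>i. (\<Xi>0 / enorm n \<eta>)\<^sup>2 * \<eta> i)"

definition even_z :: "(real \<Rightarrow> real \<Rightarrow> real) \<Rightarrow> bool" where
  "even_z Q \<longleftrightarrow> (\<forall>w\<ge>0. \<forall>z. Q w (-z) = Q w z)"

definition CD0 :: "real \<Rightarrow> nat \<Rightarrow> real \<Rightarrow> (real \<Rightarrow> real \<Rightarrow> real) \<Rightarrow> bool" where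
  "CD0 a n R Q \<longleftrightarrow>
     continuous_on {(w, z). 0 \<le> w \<and> sqrt (w\<^sup>2 + z\<^sup>2) \<le> R} (\<lambda>(w, z). Q w z) \<and>
     even_z Q \<and> C0 n (R / a) (flat a n Q)"

definition CDa :: "real \<Rightarrow> real \<Rightarrow> nat \<Rightarrow> real \<Rightarrow> (real \<Rightarrow> real \<Rightarrow> real) \<Rightarrow> bool" where
  "CDa \<alpha> a n R Q \<longleftrightarrow>
     continuous_on {(w, z). 0 \<le> w \<and> sqrt (w\<^sup>2 + z\<^sup>2) \<le> R} (\<lambda>(w, z). Q w z) \<and>
     even_z Q \<and> C0a \<alpha> n (R / a) (flat a n Q)"

text \<open>exterior spaces frak C^0_(n)(bar D^c(R0)), frak C^{0,alpha}_(n)(bar D^c(R0)), R0 = a Xi0\<close>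
definition CE0 :: "real \<Rightarrow> real \<Rightarrow> nat \<Rightarrow> (real \<Rightarrow> real \<Rightarrow> real) \<Rightarrow> bool" where
  "CE0 a \<Xi>0 n Q \<longleftrightarrow> even_z Q \<and>
     (\<exists>F. C0 n \<Xi>0 F \<and>
        (\<forall>\<eta>\<in>cballn n \<Xi>0. enorm n \<eta> \<noteq> 0 \<longrightarrow> F \<eta> = kelvin \<Xi>0 n (flat a n Q) \<eta>))"

definition CEa :: "real \<Rightarrow> real \<Rightarrow> real \<Rightarrow> nat \<Rightarrow> (real \<Rightarrow> real \<Rightarrow> real) \<Rightarrow> bool" where
  "CEa \<alpha> a \<Xi>0 n Q \<longleftrightarrow> even_z Q \<and>
     (\<exists>F. C0a \<alpha> n \<Xi>0 F \<and>
        (\<forall>\<eta>\<in>cballn n \<Xi>0. enorm n \<eta> \<noteq> 0 \<longrightarrow> F \<eta> = kelvin \<Xi>0 n (flat a n Q) \<eta>))"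

definition cut0 :: "(real \<Rightarrow> real) \<Rightarrow> real \<Rightarrow> (real \<Rightarrow> real \<Rightarrow> real) \<Rightarrow> real \<Rightarrow> real \<Rightarrow> real" where
  "cut0 chi R0 Q w z = chi (sqrt (w\<^sup>2 + z\<^sup>2) / R0) * Q w z"

definition cutinf :: "(real \<Rightarrow> real) \<Rightarrow> real \<Rightarrow> (real \<Rightarrow> real \<Rightarrow> real) \<Rightarrow> real \<Rightarrow> real \<Rightarrow> real" where
  "cutinf chi R0 Q w z = (1 - chi (sqrt (w\<^sup>2 + z\<^sup>2) / R0)) * Q w z"

definition Cn0 :: "(real \<Rightarrow> real) \<Rightarrow> real \<Rightarrow> real \<Rightarrow> nat \<Rightarrow> (real \<Rightarrow> real \<Rightarrow> real) \<Rightarrow> bool" where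
  "Cn0 chi a \<Xi>0 n Q \<longleftrightarrow> even_z Q \<and>
     CD0 a n (2 * (a * \<Xi>0)) (cut0 chi (a * \<Xi>0) Q) \<and>
     CE0 a \<Xi>0 n (cutinf chi (a * \<Xi>0) Q)"

definition Cna :: "real \<Rightarrow> (real \<Rightarrow> real) \<Rightarrow> real \<Rightarrow> real \<Rightarrow> nat \<Rightarrow> (real \<Rightarrow> real \<Rightarrow> real) \<Rightarrow> bool" where
  "Cna \<alpha> chi a \<Xi>0 n Q \<longleftrightarrow> even_z Q \<and>
     CDa \<alpha> a n (2 * (a * \<Xi>0)) (cut0 chi (a * \<Xi>0) Q) \<and>
     CEa \<alpha> a \<Xi>0 n (cutinf chi (a * \<Xi>0) Q)"

definition cutoff :: "(real \<Rightarrow> real) \<Rightarrow> bool" where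
  "cutoff chi \<longleftrightarrow> (\<forall>k x. (deriv ^^ k) chi differentiable (at x)) \<and>
     (\<forall>t\<le>1. chi t = 1) \<and> (\<forall>t. 1 < t \<and> t < 2 \<longrightarrow> 0 < chi t \<and> chi t < 1) \<and>
     (\<forall>t\<ge>2. chi t = 0)"

end

theory Submission
  imports Defs
begin

definition emb :: "nat \<Rightarrow> nat \<Rightarrow> (nat \<Rightarrow> real) \<Rightarrow> nat \<Rightarrow> real" where
  "emb n m z i = (if i < n - 1 then z i else if i = m - 1 then z (n - 1) else 0)"

lemma emb_sum:
  assumes "1 \<le> n" "n \<le> m"
  shows "(\<Sum>i<m - 1. (emb n m z i)\<^sup>2) = (\<Sum>i<n - 1. (z i)\<^sup>2)"
proof -
  have "(\<Sum>i<m - 1. (emb n m z i)\<^sup>2) = (\<Sum>i<n - 1. (emb n m z i)\<^sup>2)"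
    by (rule sum.mono_neutral_right) (use assms in \<open>auto simp: emb_def\<close>)
  also have "\<dots> = (\<Sum>i<n - 1. (z i)\<^sup>2)" by (simp add: emb_def)
  finally show ?thesis .
qed

lemma emb_last:
  assumes "1 \<le> n" "n \<le> m"
  shows "emb n m z (m - 1) = z (n - 1)"
  using assms by (simp add: emb_def)

lemma enorm_emb:
  assumes "1 \<le> n" "n \<le> m"
  shows "enorm m (emb n m z) = enorm n z"
proof -
  have m: "m = Suc (m - 1)" and n: "n = Suc (n - 1)" using assms by auto
  have "(\<Sum>i<m. (emb n m z i)\<^sup>2) = (\<Sum>i<m - 1. (emb n m z i)\<^sup>2) + (emb n m z (m - 1))\<^sup>2"
    by (subst m, subst sum.lessThan_Suc) simp
  also have "\<dots> = (\<Sum>i<n - 1. (z i)\<^sup>2) + (z (n - 1))\<^sup>2"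
    using emb_sum[OF assms] emb_last[OF assms] by simp
  also have "\<dots> = (\<Sum>i<n. (z i)\<^sup>2)"
    by (subst (2) n, subst sum.lessThan_Suc) simp
  finally show ?thesis unfolding enorm_def by simp
qed

lemma flat_emb:
  assumes "1 \<le> n" "n \<le> m"
  shows "flat a m Q (emb n m z) = flat a n Q z"
  unfolding flat_def using emb_sum[OF assms] emb_last[OF assms] by simp

lemma emb_diff: "(\<lambda>i. emb n m x i - emb n m y i) = emb n m (\<lambda>i. x i - y i)"
  by (rule ext) (simp add: emb_def)

lemma emb_scale: "(\<lambda>i. c * emb n m x i) = emb n m (\<lambda>i. c * x i)"
  by (rule ext) (simp add: emb_def)

lemma edist_emb:
  assumes "1 \<le> n" "n \<le> m"
  shows "edist m (emb n m x) (emb n m y) = edist n x y"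
  unfolding edist_def emb_diff using enorm_emb[OF assms] by simp

lemma cballn_emb:
  assumes "1 \<le> n" "n \<le> m" "x \<in> cballn n R"
  shows "emb n m x \<in> cballn m R"
  using assms enorm_emb[OF assms(1,2)] unfolding cballn_def by (auto simp: emb_def)

lemma C0_emb:
  assumes "1 \<le> n" "n \<le> m" "C0 m R f"
  shows "C0 n R (\<lambda>z. f (emb n m z))"
proof -
  from assms(3) obtain M where M: "\<forall>\<xi>\<in>cballn m R. \<bar>f \<xi>\<bar> \<le> M" unfolding C0_def by blast
  have c: "\<forall>\<xi>\<in>cballn m R. \<forall>\<epsilon>>0. \<exists>\<delta>>0. \<forall>\<eta>\<in>cballn m R.
        edist m \<eta> \<xi> < \<delta> \<longrightarrow> \<bar>f \<eta> - f \<xi>\<bar> < \<epsilon>" using assms(3) unfolding C0_def by blast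
  show ?thesis unfolding C0_def
  proof (intro conjI)
    show "\<exists>M. \<forall>\<xi>\<in>cballn n R. \<bar>f (emb n m \<xi>)\<bar> \<le> M"
      using M cballn_emb[OF assms(1,2)] by blast
    show "\<forall>\<xi>\<in>cballn n R. \<forall>\<epsilon>>0. \<exists>\<delta>>0. \<forall>\<eta>\<in>cballn n R.
        edist n \<eta> \<xi> < \<delta> \<longrightarrow> \<bar>f (emb n m \<eta>) - f (emb n m \<xi>)\<bar> < \<epsilon>"
    proof (intro ballI allI impI)
      fix \<xi> :: "nat \<Rightarrow> real" and \<epsilon> :: real assume \<xi>: "\<xi> \<in> cballn n R" and e: "\<epsilon> > 0"
      obtain \<delta> where d: "\<delta> > 0" "\<forall>\<eta>\<in>cballn m R.
        edist m \<eta> (emb n m \<xi>) < \<delta> \<longrightarrow> \<bar>f \<eta> - f (emb n m \<xi>)\<bar> < \<epsilon>"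
        using c cballn_emb[OF assms(1,2) \<xi>] e by blast
      show "\<exists>\<delta>>0. \<forall>\<eta>\<in>cballn n R.
        edist n \<eta> \<xi> < \<delta> \<longrightarrow> \<bar>f (emb n m \<eta>) - f (emb n m \<xi>)\<bar> < \<epsilon>"
        using d cballn_emb[OF assms(1,2)] edist_emb[OF assms(1,2)] by metis
    qed
  qed
qed

lemma C0a_emb:
  assumes "1 \<le> n" "n \<le> m" "C0a \<alpha> m R f"
  shows "C0a \<alpha> n R (\<lambda>z. f (emb n m z))"
proof -
  from assms(3) obtain M where M: "\<forall>\<xi>\<in>cballn m R. \<bar>f \<xi>\<bar> \<le> M" unfolding C0a_def by blast
  from assms(3) obtain H where H: "\<forall>\<xi>\<in>cballn m R. \<forall>\<xi>'\<in>cballn m R.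
        0 < edist m \<xi>' \<xi> \<and> edist m \<xi>' \<xi> \<le> 1 \<longrightarrow>
        \<bar>f \<xi>' - f \<xi>\<bar> \<le> H * (edist m \<xi>' \<xi>) powr \<alpha>" unfolding C0a_def by blast
  show ?thesis unfolding C0a_def
  proof (intro conjI)
    show "\<exists>M. \<forall>\<xi>\<in>cballn n R. \<bar>f (emb n m \<xi>)\<bar> \<le> M"
      using M cballn_emb[OF assms(1,2)] by blast
    show "\<exists>H. \<forall>\<xi>\<in>cballn n R. \<forall>\<xi>'\<in>cballn n R.
        0 < edist n \<xi>' \<xi> \<and> edist n \<xi>' \<xi> \<le> 1 \<longrightarrow>
        \<bar>f (emb n m \<xi>') - f (emb n m \<xi>)\<bar> \<le> H * (edist n \<xi>' \<xi>) powr \<alpha>"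
      using H cballn_emb[OF assms(1,2)] edist_emb[OF assms(1,2)] by metis
  qed
qed


lemma enorm_nonneg: "0 \<le> enorm n x"
  unfolding enorm_def by (simp add: sum_nonneg)

lemma edist_nonneg: "0 \<le> edist n x y"
  unfolding edist_def by (rule enorm_nonneg)

lemma enorm_lip: "\<bar>enorm n x - enorm n y\<bar> \<le> edist n x y"
proof -
  have e: "enorm n z = L2_set z {..<n}" for z unfolding enorm_def L2_set_def by simp
  have d1: "edist n x y = L2_set (\<lambda>i. x i - y i) {..<n}" unfolding edist_def e ..
  have d2: "edist n x y = L2_set (\<lambda>i. y i - x i) {..<n}"
    unfolding edist_def enorm_def L2_set_def by (simp add: power2_commute)
  have "L2_set x {..<n} \<le> L2_set (\<lambda>i. x i - y i) {..<n} + L2_set y {..<n}"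
    using L2_set_triangle_ineq[of "\<lambda>i. x i - y i" y "{..<n}"] by simp
  moreover have "L2_set y {..<n} \<le> L2_set (\<lambda>i. y i - x i) {..<n} + L2_set x {..<n}"
    using L2_set_triangle_ineq[of "\<lambda>i. y i - x i" x "{..<n}"] by simp
  ultimately show ?thesis unfolding e d1[symmetric] using d2 by linarith
qed

lemma power_lip:
  fixes x y :: real
  assumes "0 \<le> x" "x \<le> 1" "0 \<le> y" "y \<le> 1"
  shows "\<bar>x ^ k - y ^ k\<bar> \<le> real k * \<bar>x - y\<bar>"
proof (induction k)
  case 0 then show ?case by simp
next
  case (Suc k)
  have "x ^ Suc k - y ^ Suc k = x * (x ^ k - y ^ k) + y ^ k * (x - y)"
    by (simp add: algebra_simps)
  hence "\<bar>x ^ Suc k - y ^ Suc k\<bar> \<le> \<bar>x * (x ^ k - y ^ k)\<bar> + \<bar>y ^ k * (x - y)\<bar>"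
    using abs_triangle_ineq by simp
  hence "\<bar>x ^ Suc k - y ^ Suc k\<bar> \<le> \<bar>x\<bar> * \<bar>x ^ k - y ^ k\<bar> + \<bar>y ^ k\<bar> * \<bar>x - y\<bar>"
    by (simp add: abs_mult)
  also have "\<dots> \<le> 1 * \<bar>x ^ k - y ^ k\<bar> + 1 * \<bar>x - y\<bar>"
    apply (rule add_mono; rule mult_right_mono)
    using assms by (auto simp: power_le_one)
  also have "\<dots> \<le> real (Suc k) * \<bar>x - y\<bar>" using Suc.IH by (simp add: algebra_simps)
  finally show ?case .
qed

lemma prod_diff_bound:
  fixes a b c d :: real
  shows "\<bar>a * b - c * d\<bar> \<le> \<bar>a - c\<bar> * \<bar>b\<bar> + \<bar>c\<bar> * \<bar>b - d\<bar>"
proof -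
  have "a * b - c * d = (a - c) * b + c * (b - d)" by (simp add: algebra_simps)
  hence "\<bar>a * b - c * d\<bar> \<le> \<bar>(a - c) * b\<bar> + \<bar>c * (b - d)\<bar>"
    using abs_triangle_ineq by simp
  thus ?thesis by (simp add: abs_mult)
qed

lemma C0_mult:
  assumes "C0 n R f" "\<forall>x\<in>cballn n R. \<bar>g x\<bar> \<le> 1" "L \<ge> 0"
    "\<forall>x\<in>cballn n R. \<forall>y\<in>cballn n R. \<bar>g x - g y\<bar> \<le> L * edist n x y"
  shows "C0 n R (\<lambda>x. g x * f x)"
proof -
  from assms(1) obtain M where M: "\<forall>\<xi>\<in>cballn n R. \<bar>f \<xi>\<bar> \<le> M" unfolding C0_def by blast
  have c: "\<forall>\<xi>\<in>cballn n R. \<forall>\<epsilon>>0. \<exists>\<delta>>0. \<forall>\<eta>\<in>cballn n R.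
        edist n \<eta> \<xi> < \<delta> \<longrightarrow> \<bar>f \<eta> - f \<xi>\<bar> < \<epsilon>" using assms(1) unfolding C0_def by blast
  show ?thesis unfolding C0_def
  proof (intro conjI)
    have "\<forall>\<xi>\<in>cballn n R. \<bar>g \<xi> * f \<xi>\<bar> \<le> 1 * M"
    proof
      fix \<xi> assume "\<xi> \<in> cballn n R"
      hence "\<bar>g \<xi>\<bar> * \<bar>f \<xi>\<bar> \<le> 1 * M"
        using M assms(2) by (intro mult_mono) auto
      thus "\<bar>g \<xi> * f \<xi>\<bar> \<le> 1 * M" by (simp add: abs_mult)
    qed
    then show "\<exists>M. \<forall>\<xi>\<in>cballn n R. \<bar>g \<xi> * f \<xi>\<bar> \<le> M" by auto
    show "\<forall>\<xi>\<in>cballn n R. \<forall>\<epsilon>>0. \<exists>\<delta>>0. \<forall>\<eta>\<in>cballn n R.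
        edist n \<eta> \<xi> < \<delta> \<longrightarrow> \<bar>g \<eta> * f \<eta> - g \<xi> * f \<xi>\<bar> < \<epsilon>"
    proof (intro ballI allI impI)
      fix \<xi> :: "nat \<Rightarrow> real" and \<epsilon> :: real assume \<xi>: "\<xi> \<in> cballn n R" and e: "\<epsilon> > 0"
      obtain \<delta> where d: "\<delta> > 0" "\<forall>\<eta>\<in>cballn n R.
        edist n \<eta> \<xi> < \<delta> \<longrightarrow> \<bar>f \<eta> - f \<xi>\<bar> < \<epsilon> / 2"
        using c \<xi> e by (meson half_gt_zero)
      define K where "K = L * \<bar>M\<bar> + 1"
      have "0 \<le> L * \<bar>M\<bar>" using assms(3) by simp
      hence K: "K > 0" unfolding K_def by linarith
      define \<delta>' where "\<delta>' = min \<delta> (\<epsilon> / (2 * K))"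
      have "\<delta>' > 0" unfolding \<delta>'_def using d K e by simp
      moreover have "\<bar>g \<eta> * f \<eta> - g \<xi> * f \<xi>\<bar> < \<epsilon>"
        if \<eta>: "\<eta> \<in> cballn n R" and de: "edist n \<eta> \<xi> < \<delta>'" for \<eta>
      proof -
        have fe: "\<bar>f \<eta> - f \<xi>\<bar> < \<epsilon> / 2" using d \<eta> de unfolding \<delta>'_def by auto
        have "\<bar>g \<eta> * f \<eta> - g \<xi> * f \<xi>\<bar> \<le> \<bar>g \<eta> - g \<xi>\<bar> * \<bar>f \<eta>\<bar> + \<bar>g \<xi>\<bar> * \<bar>f \<eta> - f \<xi>\<bar>"
          by (rule prod_diff_bound)
        also have "\<dots> \<le> (L * edist n \<eta> \<xi>) * \<bar>M\<bar> + 1 * \<bar>f \<eta> - f \<xi>\<bar>"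
          apply (rule add_mono; rule mult_mono)
          using assms(2,4) M \<eta> \<xi> by force+
        also have "\<dots> \<le> K * edist n \<eta> \<xi> + \<bar>f \<eta> - f \<xi>\<bar>"
          unfolding K_def using edist_nonneg[of n \<eta> \<xi>] by (simp add: algebra_simps)
        also have "K * edist n \<eta> \<xi> \<le> K * (\<epsilon> / (2 * K))"
          using de K unfolding \<delta>'_def by (intro mult_left_mono) auto
        also have "K * (\<epsilon> / (2 * K)) = \<epsilon> / 2" using K by simp
        finally show ?thesis using fe by linarith
      qed
      ultimately show "\<exists>\<delta>>0. \<forall>\<eta>\<in>cballn n R.
        edist n \<eta> \<xi> < \<delta> \<longrightarrow> \<bar>g \<eta> * f \<eta> - g \<xi> * f \<xi>\<bar> < \<epsilon>" by blast
    qed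
  qed
qed

lemma C0a_mult:
  assumes "C0a \<alpha> n R f" "\<forall>x\<in>cballn n R. \<bar>g x\<bar> \<le> 1" "L \<ge> 0" "0 < \<alpha>" "\<alpha> < 1"
    "\<forall>x\<in>cballn n R. \<forall>y\<in>cballn n R. \<bar>g x - g y\<bar> \<le> L * edist n x y"
  shows "C0a \<alpha> n R (\<lambda>x. g x * f x)"
proof -
  from assms(1) obtain M where M: "\<forall>\<xi>\<in>cballn n R. \<bar>f \<xi>\<bar> \<le> M" unfolding C0a_def by blast
  from assms(1) obtain H where H: "\<forall>\<xi>\<in>cballn n R. \<forall>\<xi>'\<in>cballn n R.
        0 < edist n \<xi>' \<xi> \<and> edist n \<xi>' \<xi> \<le> 1 \<longrightarrow>
        \<bar>f \<xi>' - f \<xi>\<bar> \<le> H * (edist n \<xi>' \<xi>) powr \<alpha>" unfolding C0a_def by blast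
  show ?thesis unfolding C0a_def
  proof (intro conjI)
    have "\<forall>\<xi>\<in>cballn n R. \<bar>g \<xi> * f \<xi>\<bar> \<le> 1 * M"
    proof
      fix \<xi> assume "\<xi> \<in> cballn n R"
      hence "\<bar>g \<xi>\<bar> * \<bar>f \<xi>\<bar> \<le> 1 * M"
        using M assms(2) by (intro mult_mono) auto
      thus "\<bar>g \<xi> * f \<xi>\<bar> \<le> 1 * M" by (simp add: abs_mult)
    qed
    then show "\<exists>M. \<forall>\<xi>\<in>cballn n R. \<bar>g \<xi> * f \<xi>\<bar> \<le> M" by auto
    have "\<bar>g \<eta> * f \<eta> - g \<xi> * f \<xi>\<bar> \<le> (L * \<bar>M\<bar> + H) * (edist n \<eta> \<xi>) powr \<alpha>"
      if \<xi>: "\<xi> \<in> cballn n R" and \<eta>: "\<eta> \<in> cballn n R" and de: "0 < edist n \<eta> \<xi>" "edist n \<eta> \<xi> \<le> 1"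
      for \<xi> \<eta>
    proof -
      let ?d = "edist n \<eta> \<xi>"
      have fe: "\<bar>f \<eta> - f \<xi>\<bar> \<le> H * ?d powr \<alpha>" using H \<xi> \<eta> de by blast
      have dd: "?d \<le> ?d powr \<alpha>"
      proof -
        have "?d powr 1 \<le> ?d powr \<alpha>" using de assms(5) by (intro powr_mono') auto
        thus ?thesis using de by simp
      qed
      have "\<bar>g \<eta> * f \<eta> - g \<xi> * f \<xi>\<bar> \<le> \<bar>g \<eta> - g \<xi>\<bar> * \<bar>f \<eta>\<bar> + \<bar>g \<xi>\<bar> * \<bar>f \<eta> - f \<xi>\<bar>"
        by (rule prod_diff_bound)
      also have "\<dots> \<le> (L * ?d) * \<bar>M\<bar> + 1 * \<bar>f \<eta> - f \<xi>\<bar>"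
        apply (rule add_mono; rule mult_mono)
        using assms(2,6) M \<eta> \<xi> by force+
      also have "\<dots> \<le> (L * \<bar>M\<bar>) * ?d powr \<alpha> + H * ?d powr \<alpha>"
      proof -
        have "(L * \<bar>M\<bar>) * ?d \<le> (L * \<bar>M\<bar>) * ?d powr \<alpha>"
          using dd assms(3) by (intro mult_left_mono) auto
        thus ?thesis using fe by (simp add: algebra_simps)
      qed
      finally show ?thesis by (simp add: algebra_simps)
    qed
    then show "\<exists>H. \<forall>\<xi>\<in>cballn n R. \<forall>\<xi>'\<in>cballn n R.
        0 < edist n \<xi>' \<xi> \<and> edist n \<xi>' \<xi> \<le> 1 \<longrightarrow>
        \<bar>g \<xi>' * f \<xi>' - g \<xi> * f \<xi>\<bar> \<le> H * (edist n \<xi>' \<xi>) powr \<alpha>" by blast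
  qed
qed


lemma flat_emb_fun:
  assumes "1 \<le> n" "n \<le> m"
  shows "flat a n Q = (\<lambda>z. flat a m Q (emb n m z))"
  using flat_emb[OF assms] by auto

lemma g_props:
  assumes "\<Xi>0 > 0"
  shows "\<forall>x\<in>cballn n \<Xi>0. \<bar>(enorm n x / \<Xi>0) ^ k\<bar> \<le> 1"
    and "\<forall>x\<in>cballn n \<Xi>0. \<forall>y\<in>cballn n \<Xi>0.
          \<bar>(enorm n x / \<Xi>0) ^ k - (enorm n y / \<Xi>0) ^ k\<bar> \<le> (real k / \<Xi>0) * edist n x y"
proof -
  have r: "0 \<le> enorm n x / \<Xi>0 \<and> enorm n x / \<Xi>0 \<le> 1" if "x \<in> cballn n \<Xi>0" for x
    using that assms enorm_nonneg[of n x] unfolding cballn_def by auto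
  show "\<forall>x\<in>cballn n \<Xi>0. \<bar>(enorm n x / \<Xi>0) ^ k\<bar> \<le> 1"
    using r by (auto simp: power_le_one)
  show "\<forall>x\<in>cballn n \<Xi>0. \<forall>y\<in>cballn n \<Xi>0.
          \<bar>(enorm n x / \<Xi>0) ^ k - (enorm n y / \<Xi>0) ^ k\<bar> \<le> (real k / \<Xi>0) * edist n x y"
  proof (intro ballI)
    fix x y assume x: "x \<in> cballn n \<Xi>0" and y: "y \<in> cballn n \<Xi>0"
    have "\<bar>(enorm n x / \<Xi>0) ^ k - (enorm n y / \<Xi>0) ^ k\<bar>
          \<le> real k * \<bar>enorm n x / \<Xi>0 - enorm n y / \<Xi>0\<bar>"
      using r[OF x] r[OF y] by (intro power_lip) auto
    also have "\<bar>enorm n x / \<Xi>0 - enorm n y / \<Xi>0\<bar> = \<bar>enorm n x - enorm n y\<bar> / \<Xi>0"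
      using assms by (simp add: diff_divide_distrib[symmetric])
    also have "real k * (\<bar>enorm n x - enorm n y\<bar> / \<Xi>0) \<le> real k * (edist n x y / \<Xi>0)"
      using enorm_lip[of n x y] assms by (intro mult_left_mono divide_right_mono) auto
    finally show "\<bar>(enorm n x / \<Xi>0) ^ k - (enorm n y / \<Xi>0) ^ k\<bar> \<le> (real k / \<Xi>0) * edist n x y"
      by simp
  qed
qed

lemma kelvin_down:
  assumes "3 \<le> n" "n \<le> m" "\<Xi>0 > 0" "\<eta> \<in> cballn n \<Xi>0" "enorm n \<eta> \<noteq> 0"
  shows "(enorm n \<eta> / \<Xi>0) ^ (m - n) * kelvin \<Xi>0 m (flat a m Q) (emb n m \<eta>)
         = kelvin \<Xi>0 n (flat a n Q) \<eta>"
proof -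
  have n1: "1 \<le> n" using assms by simp
  let ?e = "enorm n \<eta>"
  have e: "enorm m (emb n m \<eta>) = ?e" using enorm_emb[OF n1 assms(2)] .
  have fl: "flat a m Q (\<lambda>i. (\<Xi>0 / ?e)\<^sup>2 * emb n m \<eta> i) = flat a n Q (\<lambda>i. (\<Xi>0 / ?e)\<^sup>2 * \<eta> i)"
    unfolding emb_scale by (rule flat_emb[OF n1 assms(2)])
  have ep: "?e > 0" using enorm_nonneg[of n \<eta>] assms(5) by linarith
  have mm: "m - 2 = (m - n) + (n - 2)" using assms by simp
  have "(?e / \<Xi>0) ^ (m - n) * (\<Xi>0 / ?e) ^ (m - 2) = ((?e / \<Xi>0) * (\<Xi>0 / ?e)) ^ (m - n) * (\<Xi>0 / ?e) ^ (n - 2)"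
    unfolding mm power_add power_mult_distrib by simp
  also have "(?e / \<Xi>0) * (\<Xi>0 / ?e) = 1" using ep assms(3) by simp
  finally have pw: "(?e / \<Xi>0) ^ (m - n) * (\<Xi>0 / ?e) ^ (m - 2) = (\<Xi>0 / ?e) ^ (n - 2)" by simp
  show ?thesis unfolding kelvin_def e fl using pw by (simp add: mult.assoc[symmetric])
qed

lemma CE0_down:
  assumes "3 \<le> n" "n \<le> m" "\<Xi>0 > 0" "CE0 a \<Xi>0 m P"
  shows "CE0 a \<Xi>0 n P"
proof -
  have n1: "1 \<le> n" using assms by simp
  obtain F where F: "C0 m \<Xi>0 F"
    "\<forall>\<eta>\<in>cballn m \<Xi>0. enorm m \<eta> \<noteq> 0 \<longrightarrow> F \<eta> = kelvin \<Xi>0 m (flat a m P) \<eta>"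
    and ev: "even_z P" using assms(4) unfolding CE0_def by blast
  define G where "G \<eta> = (enorm n \<eta> / \<Xi>0) ^ (m - n) * F (emb n m \<eta>)" for \<eta>
  have "C0 n \<Xi>0 G" unfolding G_def
    using C0_mult[OF C0_emb[OF n1 assms(2) F(1)] g_props(1)[OF assms(3)] _ g_props(2)[OF assms(3)]]
      assms(3) by simp
  moreover have "G \<eta> = kelvin \<Xi>0 n (flat a n P) \<eta>"
    if "\<eta> \<in> cballn n \<Xi>0" "enorm n \<eta> \<noteq> 0" for \<eta>
  proof -
    have "F (emb n m \<eta>) = kelvin \<Xi>0 m (flat a m P) (emb n m \<eta>)"
      using F(2) cballn_emb[OF n1 assms(2) that(1)] enorm_emb[OF n1 assms(2)] that(2) by simp
    thus ?thesis unfolding G_def using kelvin_down[OF assms(1-3) that] by simp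
  qed
  ultimately show ?thesis unfolding CE0_def using ev by blast
qed

lemma CEa_down:
  assumes "3 \<le> n" "n \<le> m" "\<Xi>0 > 0" "0 < \<alpha>" "\<alpha> < 1" "CEa \<alpha> a \<Xi>0 m P"
  shows "CEa \<alpha> a \<Xi>0 n P"
proof -
  have n1: "1 \<le> n" using assms by simp
  obtain F where F: "C0a \<alpha> m \<Xi>0 F"
    "\<forall>\<eta>\<in>cballn m \<Xi>0. enorm m \<eta> \<noteq> 0 \<longrightarrow> F \<eta> = kelvin \<Xi>0 m (flat a m P) \<eta>"
    and ev: "even_z P" using assms(6) unfolding CEa_def by blast
  define G where "G \<eta> = (enorm n \<eta> / \<Xi>0) ^ (m - n) * F (emb n m \<eta>)" for \<eta>
  have "C0a \<alpha> n \<Xi>0 G" unfolding G_def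
    using C0a_mult[OF C0a_emb[OF n1 assms(2) F(1)] g_props(1)[OF assms(3)] _ assms(4,5) g_props(2)[OF assms(3)]]
      assms(3) by simp
  moreover have "G \<eta> = kelvin \<Xi>0 n (flat a n P) \<eta>"
    if "\<eta> \<in> cballn n \<Xi>0" "enorm n \<eta> \<noteq> 0" for \<eta>
  proof -
    have "F (emb n m \<eta>) = kelvin \<Xi>0 m (flat a m P) (emb n m \<eta>)"
      using F(2) cballn_emb[OF n1 assms(2) that(1)] enorm_emb[OF n1 assms(2)] that(2) by simp
    thus ?thesis unfolding G_def using kelvin_down[OF assms(1-3) that] by simp
  qed
  ultimately show ?thesis unfolding CEa_def using ev by blast
qed

theorem proposition9:
  fixes a \<Xi>0 \<alpha> :: real and chi :: "real \<Rightarrow> real" and m n :: nat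
    and Q :: "real \<Rightarrow> real \<Rightarrow> real"
  assumes "a > 0" "\<Xi>0 > 0" "0 < \<alpha>" "\<alpha> < 1" "cutoff chi"
    and "m \<ge> n" "n \<ge> 3"
  shows "(Cn0 chi a \<Xi>0 m Q \<longrightarrow> Cn0 chi a \<Xi>0 n Q) \<and>
         (Cna \<alpha> chi a \<Xi>0 m Q \<longrightarrow> Cna \<alpha> chi a \<Xi>0 n Q)"
proof -
  have n1: "1 \<le> n" using assms by simp
  have fl: "flat a n P = (\<lambda>z. flat a m P (emb n m z))" for P
    by (rule flat_emb_fun[OF n1 assms(6)])
  have "CD0 a n R P" if "CD0 a m R P" for R P
    using that C0_emb[OF n1 assms(6)] unfolding CD0_def fl by blast
  moreover have "CDa \<alpha> a n R P" if "CDa \<alpha> a m R P" for R P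
    using that C0a_emb[OF n1 assms(6)] unfolding CDa_def fl by blast
  moreover note CE0_down[OF assms(7,6,2)] CEa_down[OF assms(7,6,2,3,4)]
  ultimately show ?thesis unfolding Cn0_def Cna_def by blast
qed

end
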